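(* Given $r>0$, there exists $\delta>0$, depending only on $n$, $s$, $\lambda$, $\Lambda$ and $r$, such that the following holds. If $a>0$ and $w$ satisfies $Lw\ge a$ in $B_r\cap\{w\le0\}$ and $w\ge-\delta a$ in all of $\mathbb{R}^n$, then $w>0$ in $\overline{B_{r/2}}$.
   Context: Let $n\ge2$, $s\in(0,1)$. $Lu(x)=\int_{\mathbb{R}^n}(u(x)-u(x+y))\frac{\mu(y/|y|)}{|y|^{n+s}}dy$ with $\mu:S^{n-1}\to\mathbb{R}$ measurable, $\mu(z)=\mu(-z)$ and $0<\lambda\le\mu\le\Lambda<\infty$. *)

theory Defs
  imports "HOL-Analysis.Analysis"
begin

definition stable_integrand ::
  "('a::euclidean_space \<Rightarrow> real) \<Rightarrow> real \<Rightarrow> ('a \<Rightarrow> real) \<Rightarrow> 'a \<Rightarrow> 'a \<Rightarrow> real" where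
  "stable_integrand mu s u x y =
     (u x - u (x + y)) * mu (y /\<^sub>R norm y) / norm y powr (real DIM('a) + s)"

definition stable_op_defined ::
  "('a::euclidean_space \<Rightarrow> real) \<Rightarrow> real \<Rightarrow> ('a \<Rightarrow> real) \<Rightarrow> 'a \<Rightarrow> bool" where
  "stable_op_defined mu s u x = integrable lborel (stable_integrand mu s u x)"

definition stable_op ::
  "('a::euclidean_space \<Rightarrow> real) \<Rightarrow> real \<Rightarrow> ('a \<Rightarrow> real) \<Rightarrow> 'a \<Rightarrow> real" where
  "stable_op mu s u x = (\<integral>y. stable_integrand mu s u x y \<partial>lborel)"

end

theory Submission
  imports Defs
begin

lemma log2_nonneg: "1 \<le> (x::real) \<Longrightarrow> log 2 x \<ge> 0" by simp

lemma ennr_sum_upper: "(f::nat\<Rightarrow>ennreal) k \<le> (\<Sum>k. f k)"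
  using ennreal_suminf_lessD leI by blast

lemma pow2_lt: "0 < (x::real) \<Longrightarrow> - log 2 x < t \<Longrightarrow> 2 powr (- t) < x"
  by (subst less_log_iff[symmetric]) auto

lemma pow2_le: "0 < (x::real) \<Longrightarrow> t \<le> - log 2 x \<Longrightarrow> x \<le> 2 powr (- t)"
  by (subst log_le_iff[symmetric]) auto

lemma alg1: "2 powr (-(real k * (real n + s))) * (2 powr (real k + 1))^n = 2 powr n * (2 powr (-s))^k"
proof -
  have e1: "(2 powr (real k + 1))^n = 2 powr (real n * (real k + 1))" by (subst powr_power) auto
  have "2 powr (-(real k * (real n + s))) * (2 powr (real k + 1))^n
     = 2 powr (-(real k * (real n + s)) + real n * (real k + 1))"
    unfolding e1 by (rule powr_add[symmetric])
  also have "-(real k * (real n + s)) + real n * (real k + 1) = real n + real k * (-s)"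
    by (simp add: algebra_simps)
  also have "2 powr (real n + real k * (-s)) = 2 powr n * 2 powr (real k * (-s))"
    by (rule powr_add)
  also have "2 powr (real k * (-s)) = (2 powr (-s))^k" by (subst powr_power) auto
  finally show ?thesis .
qed

lemma alg2: "2 powr ((real k + 1) * (real n + s - 1)) * (2 powr (- real k))^n
   = 2 powr (real n + s - 1) * (2 powr (s - 1))^k"
proof -
  have e1: "(2 powr (- real k))^n = 2 powr (real n * (- real k))" by (subst powr_power) auto
  have "2 powr ((real k + 1) * (real n + s - 1)) * (2 powr (- real k))^n
     = 2 powr ((real k + 1) * (real n + s - 1) + real n * (- real k))"
    unfolding e1 by (rule powr_add[symmetric])
  also have "(real k + 1) * (real n + s - 1) + real n * (- real k) = (real n + s - 1) + real k * (s - 1)"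
    by (simp add: algebra_simps)
  also have "2 powr ((real n + s - 1) + real k * (s - 1)) = 2 powr (real n + s - 1) * 2 powr (real k * (s - 1))"
    by (rule powr_add)
  also have "2 powr (real k * (s - 1)) = (2 powr (s - 1))^k" by (subst powr_power) auto
  finally show ?thesis .
qed

lemma G_integrable:
  fixes s :: real
  assumes s0: "0 < s" and s1: "s < 1"
  shows "integrable lborel (\<lambda>y::'a::euclidean_space. min 1 (norm y) / norm y powr (real DIM('a) + s))"
proof -
  define n where "n = DIM('a)"
  define p where "p = real n + s"
  define G where "G = (\<lambda>y::'a. min 1 (norm y) / norm y powr p)"
  define V where "V = unit_ball_vol (real n)"
  have n1: "n \<ge> 1" unfolding n_def by (simp add: DIM_positive Suc_leI)
  have V0: "V \<ge> 0" unfolding V_def by simp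
  define A where "A = (\<lambda>k::nat. 2 powr (-(real k * p)))"
  define R1 where "R1 = (\<lambda>k::nat. 2 powr (real k + 1))"
  define B where "B = (\<lambda>k::nat. 2 powr ((real k + 1) * (p - 1)))"
  define R2 where "R2 = (\<lambda>k::nat. 2 powr (- real k))"
  have G0: "G y \<ge> 0" for y unfolding G_def by simp
  have pw: "ennreal (G y) \<le> (\<Sum>k. ennreal (A k) * indicator (cball (0::'a) (R1 k)) y)
      + (\<Sum>k. ennreal (B k) * indicator (cball (0::'a) (R2 k)) y)" for y
  proof -
    consider "y = 0" | "norm y \<ge> 1" | "0 < norm y" "norm y < 1" by force
    then show ?thesis
    proof cases
      case 1 then show ?thesis by (simp add: G_def)
    next
      case 2
      define k where "k = nat \<lfloor>log 2 (norm y)\<rfloor>"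
      have lg: "log 2 (norm y) \<ge> 0" using 2 by (rule log2_nonneg)
      have kle: "real k \<le> log 2 (norm y)" unfolding k_def using lg by linarith
      have klt: "log 2 (norm y) < real k + 1" unfolding k_def using lg by linarith
      have ny: "norm y > 0" using 2 by linarith
      have a1: "2 powr real k \<le> norm y"
        using kle ny by (metis le_log_iff one_less_numeral_iff powr_gt_zero semiring_norm(76))
      have a2: "norm y \<le> R1 k" unfolding R1_def
        using klt ny by (smt (verit) log_less_iff one_less_numeral_iff powr_gt_zero semiring_norm(76))
      have p0: "p > 0" unfolding p_def using s0 by simp
      have "G y = 1 / norm y powr p" unfolding G_def using 2 by simp
      also have "\<dots> \<le> 1 / (2 powr real k) powr p"
        using a1 p0 by (intro divide_left_mono powr_mono2 mult_pos_pos) auto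
      also have "\<dots> = A k" unfolding A_def by (simp add: powr_powr powr_minus_divide)
      finally have "ennreal (G y) \<le> ennreal (A k) * indicator (cball (0::'a) (R1 k)) y"
        using a2 by (simp add: ennreal_leI)
      also have "\<dots> \<le> (\<Sum>k. ennreal (A k) * indicator (cball (0::'a) (R1 k)) y)"
        by (rule ennr_sum_upper)
      finally show ?thesis by (simp add: add_increasing2)
    next
      case 3
      define k where "k = nat \<lfloor>- log 2 (norm y)\<rfloor>"
      have lg: "- log 2 (norm y) > 0" using 3 by simp
      have kle: "real k \<le> - log 2 (norm y)" unfolding k_def using lg by linarith
      have klt: "- log 2 (norm y) < real k + 1" unfolding k_def using lg by linarith
      have a1: "2 powr (- (real k + 1)) < norm y"
        using klt 3 by (intro pow2_lt) auto
      have a2: "norm y \<le> R2 k" unfolding R2_def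
        using kle 3 by (intro pow2_le) auto
      have p1: "1 - p < 0" unfolding p_def using s0 n1 by simp
      have "G y = norm y / norm y powr p" unfolding G_def using 3 by simp
      also have "\<dots> = norm y powr (1 - p)" using 3 by (simp add: powr_diff)
      also have "\<dots> \<le> (2 powr (- (real k + 1))) powr (1 - p)"
        using a1 p1 by (intro powr_mono2') auto
      also have "\<dots> = B k" unfolding B_def by (simp add: powr_powr algebra_simps)
      finally have "ennreal (G y) \<le> ennreal (B k) * indicator (cball (0::'a) (R2 k)) y"
        using a2 by (simp add: ennreal_leI)
      also have "\<dots> \<le> (\<Sum>k. ennreal (B k) * indicator (cball (0::'a) (R2 k)) y)"
        by (rule ennr_sum_upper)
      finally show ?thesis by (simp add: add_increasing)
    qed
  qed
  have Gm: "G \<in> borel_measurable lborel" unfolding G_def by measurable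
  have S1: "(\<integral>\<^sup>+y. (\<Sum>k. ennreal (A k) * indicator (cball (0::'a) (R1 k)) y) \<partial>lborel) < \<infinity>"
  proof -
    have "(\<integral>\<^sup>+y. (\<Sum>k. ennreal (A k) * indicator (cball (0::'a) (R1 k)) y) \<partial>lborel)
        = (\<Sum>k. \<integral>\<^sup>+y. ennreal (A k) * indicator (cball (0::'a) (R1 k)) y \<partial>lborel)"
      by (subst nn_integral_suminf) (measurable, simp add: pred_def, simp)
    also have "\<dots> = (\<Sum>k. ennreal (V * 2 powr n * (2 powr (-s))^k))"
    proof (intro suminf_cong)
      fix k
      have "(\<integral>\<^sup>+y. ennreal (A k) * indicator (cball (0::'a) (R1 k)) y \<partial>lborel)
          = ennreal (A k) * ennreal (V * R1 k ^ n)"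
        using R1_def by (simp add: nn_integral_cmult_indicator emeasure_cball V_def n_def)
      also have "\<dots> = ennreal (V * (A k * R1 k ^ n))"
        unfolding A_def R1_def by (simp add: ennreal_mult'[symmetric] V0 mult.commute mult.left_commute)
      also have "A k * R1 k ^ n = 2 powr n * (2 powr (-s))^k"
        unfolding A_def R1_def p_def by (rule alg1)
      finally show "(\<integral>\<^sup>+y. ennreal (A k) * indicator (cball (0::'a) (R1 k)) y \<partial>lborel)
          = ennreal (V * 2 powr n * (2 powr (-s))^k)" by (simp add: mult.assoc)
    qed
    also have "\<dots> = ennreal (\<Sum>k. V * 2 powr n * (2 powr (-s))^k)"
    proof (rule suminf_ennreal2)
      show "summable (\<lambda>k. V * 2 powr real n * (2 powr - s) ^ k)"
        using s0 by (intro summable_mult summable_geometric) (auto intro!: powr_less_one)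
    qed (use V0 in auto)
    finally show ?thesis by simp
  qed
  have S2: "(\<integral>\<^sup>+y. (\<Sum>k. ennreal (B k) * indicator (cball (0::'a) (R2 k)) y) \<partial>lborel) < \<infinity>"
  proof -
    have "(\<integral>\<^sup>+y. (\<Sum>k. ennreal (B k) * indicator (cball (0::'a) (R2 k)) y) \<partial>lborel)
        = (\<Sum>k. \<integral>\<^sup>+y. ennreal (B k) * indicator (cball (0::'a) (R2 k)) y \<partial>lborel)"
      by (subst nn_integral_suminf) (measurable, simp add: pred_def, simp)
    also have "\<dots> = (\<Sum>k. ennreal (V * 2 powr (real n + s - 1) * (2 powr (s - 1))^k))"
    proof (intro suminf_cong)
      fix k
      have "(\<integral>\<^sup>+y. ennreal (B k) * indicator (cball (0::'a) (R2 k)) y \<partial>lborel)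
          = ennreal (B k) * ennreal (V * R2 k ^ n)"
        using R2_def by (simp add: nn_integral_cmult_indicator emeasure_cball V_def n_def)
      also have "\<dots> = ennreal (V * (B k * R2 k ^ n))"
        unfolding B_def R2_def by (simp add: ennreal_mult'[symmetric] V0 mult.commute mult.left_commute)
      also have "B k * R2 k ^ n = 2 powr (real n + s - 1) * (2 powr (s - 1))^k"
        unfolding B_def R2_def p_def by (rule alg2)
      finally show "(\<integral>\<^sup>+y. ennreal (B k) * indicator (cball (0::'a) (R2 k)) y \<partial>lborel)
          = ennreal (V * 2 powr (real n + s - 1) * (2 powr (s - 1))^k)" by (simp add: mult.assoc)
    qed
    also have "\<dots> = ennreal (\<Sum>k. V * 2 powr (real n + s - 1) * (2 powr (s - 1))^k)"
    proof (rule suminf_ennreal2)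
      show "summable (\<lambda>k. V * 2 powr (real n + s - 1) * (2 powr (s - 1)) ^ k)"
        using s1 by (intro summable_mult summable_geometric) (auto intro!: powr_less_one)
    qed (use V0 in auto)
    finally show ?thesis by simp
  qed
  have "(\<integral>\<^sup>+y. ennreal (norm (G y)) \<partial>lborel)
     \<le> (\<integral>\<^sup>+y. (\<Sum>k. ennreal (A k) * indicator (cball (0::'a) (R1 k)) y)
      + (\<Sum>k. ennreal (B k) * indicator (cball (0::'a) (R2 k)) y) \<partial>lborel)"
    using pw G0 by (intro nn_integral_mono) auto
  also have "\<dots> = (\<integral>\<^sup>+y. (\<Sum>k. ennreal (A k) * indicator (cball (0::'a) (R1 k)) y) \<partial>lborel)
      + (\<integral>\<^sup>+y. (\<Sum>k. ennreal (B k) * indicator (cball (0::'a) (R2 k)) y) \<partial>lborel)"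
    by (rule nn_integral_add) (measurable, (simp add: pred_def)+, measurable, (simp add: pred_def)+)
  also have "\<dots> < \<infinity>" using S1 S2 by (simp add: ennreal_add_less_top)
  finally have "integrable lborel G" by (intro integrableI_bounded Gm)
  then show ?thesis unfolding G_def p_def n_def .
qed

lemma eta_lip: "\<bar>min 1 (max 0 u) - min 1 (max 0 v)\<bar> \<le> \<bar>u - v\<bar>" for u v :: real
  by (simp add: abs_if min_def max_def)

theorem lemma5p9:
  fixes s lam Lam r :: real
  assumes "DIM('a::euclidean_space) \<ge> 2"
    and "0 < s" and "s < 1"
    and "0 < lam" and "lam \<le> Lam"
    and "0 < r"
  shows "\<exists>\<delta>>0. \<forall>(mu::'a \<Rightarrow> real) (a::real) (w::'a \<Rightarrow> real).
    mu \<in> borel_measurable (restrict_space borel (sphere 0 1))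
    \<and> (\<forall>z\<in>sphere 0 1. mu (- z) = mu z \<and> lam \<le> mu z \<and> mu z \<le> Lam)
    \<and> 0 < a
    \<and> continuous_on UNIV w
    \<and> (\<forall>x\<in>ball 0 r. w x \<le> 0 \<longrightarrow>
          stable_op_defined mu s w x \<and> a \<le> stable_op mu s w x)
    \<and> (\<forall>x. - \<delta> * a \<le> w x)
    \<longrightarrow> (\<forall>x\<in>cball 0 (r / 2). 0 < w x)"
proof -
  define p where "p = real DIM('a) + s"
  define G where "G = (\<lambda>y::'a. min 1 (norm y) / norm y powr p)"
  have Gi: "integrable lborel G" unfolding G_def p_def using assms(2,3) by (rule G_integrable)
  define C where "C = integral\<^sup>L lborel G"
  have C0: "C \<ge> 0" unfolding C_def G_def by (intro integral_nonneg_AE) auto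
  define M where "M = max 1 (4 / r)"
  have M1: "M \<ge> 1" unfolding M_def by simp
  have Lam0: "Lam > 0" using assms by simp
  define \<delta> where "\<delta> = 1 / (4 * M * Lam * (C + 1))"
  have d0: "\<delta> > 0" unfolding \<delta>_def using M1 Lam0 C0 by simp
  have dsmall: "2 * \<delta> * M * Lam * C < 1 / 2"
  proof -
    have pos: "4 * M * Lam * (C + 1) > 0" using M1 Lam0 C0 by simp
    have e: "\<delta> * (4 * M * Lam * (C + 1)) = 1" unfolding \<delta>_def using pos using M1 Lam0 C0 by auto
    have e2: "4 * (\<delta> * M * Lam) * C + 4 * (\<delta> * M * Lam) = 1" using e by (simp add: algebra_simps)
    have X0: "\<delta> * M * Lam > 0" using d0 M1 Lam0 by simp
    have "2 * (\<delta> * M * Lam) * C < 1 / 2" using e2 X0 by linarith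
    then show ?thesis by (simp add: mult.assoc)
  qed
  define \<eta> where "\<eta> = (\<lambda>x::'a. min 1 (max 0 (3 - 4 * norm x / r)))"
  have eta01: "0 \<le> \<eta> x \<and> \<eta> x \<le> 1" for x unfolding \<eta>_def by simp
  have eta1: "norm x \<le> r / 2 \<Longrightarrow> \<eta> x = 1" for x
    unfolding \<eta>_def using assms(6) by (simp add: field_simps)
  have eta0: "norm x > 3 * r / 4 \<Longrightarrow> \<eta> x = 0" for x
    unfolding \<eta>_def using assms(6) by (simp add: field_simps)
  have etacont: "continuous_on UNIV \<eta>" unfolding \<eta>_def using assms(6) by (intro continuous_intros) auto
  have etalip: "\<eta> x - \<eta> (x + y) \<le> M * min 1 (norm y)" for x y
  proof -
    have "\<eta> x - \<eta> (x + y) \<le> \<bar>(3 - 4 * norm x / r) - (3 - 4 * norm (x + y) / r)\<bar>"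
      unfolding \<eta>_def using eta_lip by (meson abs_le_D1 order_trans)
    also have "(3 - 4 * norm x / r) - (3 - 4 * norm (x + y) / r) = 4 / r * (norm (x + y) - norm x)"
      by (simp add: algebra_simps diff_divide_distrib)
    also have "\<bar>4 / r * (norm (x + y) - norm x)\<bar> = 4 / r * \<bar>norm (x + y) - norm x\<bar>"
      using assms(6) by (subst abs_mult) simp
    also have "\<dots> \<le> 4 / r * norm y"
      using assms(6) norm_triangle_ineq3[of "x + y" x] by (intro mult_left_mono) auto
    finally have h1: "\<eta> x - \<eta> (x + y) \<le> 4 / r * norm y" .
    have h2: "\<eta> x - \<eta> (x + y) \<le> 1" using eta01[of x] eta01[of "x+y"] by linarith
    show ?thesis
    proof (cases "norm y \<le> 1")
      case True
      have "4 / r * norm y \<le> M * norm y" unfolding M_def by (intro mult_right_mono) auto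
      then show ?thesis using h1 True by simp
    next
      case False then show ?thesis using h2 M1 by simp
    qed
  qed
  show ?thesis
  proof (intro exI[of _ \<delta>] conjI d0 allI impI)
    fix mu :: "'a \<Rightarrow> real" and a :: real and w :: "'a \<Rightarrow> real"
    assume H: "mu \<in> borel_measurable (restrict_space borel (sphere 0 1))
    \<and> (\<forall>z\<in>sphere 0 1. mu (- z) = mu z \<and> lam \<le> mu z \<and> mu z \<le> Lam)
    \<and> 0 < a
    \<and> continuous_on UNIV w
    \<and> (\<forall>x\<in>ball 0 r. w x \<le> 0 \<longrightarrow>
          stable_op_defined mu s w x \<and> a \<le> stable_op mu s w x)
    \<and> (\<forall>x. - \<delta> * a \<le> w x)"
    then have mub: "\<And>z. z \<in> sphere 0 1 \<Longrightarrow> lam \<le> mu z \<and> mu z \<le> Lam"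
      and a0: "0 < a" and wc: "continuous_on UNIV w"
      and Lw: "\<And>x. x \<in> ball 0 r \<Longrightarrow> w x \<le> 0 \<Longrightarrow> stable_op_defined mu s w x \<and> a \<le> stable_op mu s w x"
      and wlow: "\<And>x. - \<delta> * a \<le> w x"
      by auto
    show "\<forall>x\<in>cball 0 (r / 2). 0 < w x"
    proof (rule ccontr)
      assume "\<not> (\<forall>x\<in>cball 0 (r / 2). 0 < w x)"
      then obtain x0 where x0: "norm x0 \<le> r / 2" "w x0 \<le> 0" by (auto simp: not_less)
      define v where "v = (\<lambda>x. w x - 2 * \<delta> * a * \<eta> x)"
      have vc: "continuous_on (cball 0 (3 * r / 4)) v" unfolding v_def
        using wc etacont by (intro continuous_intros continuous_on_subset[OF wc] continuous_on_subset[OF etacont]) auto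
      have x0K: "x0 \<in> cball 0 (3 * r / 4)" using x0 assms(6) by simp
      obtain xs where xsK: "xs \<in> cball 0 (3 * r / 4)" and xsmin: "\<And>z. z \<in> cball 0 (3 * r / 4) \<Longrightarrow> v xs \<le> v z"
        using continuous_attains_inf[OF compact_cball _ vc] x0K by blast
      have vx0: "v x0 \<le> - 2 * \<delta> * a" unfolding v_def using eta1[OF x0(1)] x0(2) by simp
      have vmin: "v xs \<le> v z" for z
      proof (cases "z \<in> cball 0 (3 * r / 4)")
        case True then show ?thesis by (rule xsmin)
      next
        case False
        then have "v z = w z" unfolding v_def using eta0[of z] by simp
        moreover have "- 2 * \<delta> * a \<le> - \<delta> * a" using d0 a0 by simp
        ultimately show ?thesis using xsmin[OF x0K] vx0 wlow[of z] by linarith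
      qed
      have wxs: "w xs \<le> 0"
      proof -
        have "w xs = v xs + 2 * \<delta> * a * \<eta> xs" unfolding v_def by simp
        also have "\<dots> \<le> - 2 * \<delta> * a + 2 * \<delta> * a * 1"
          using xsmin[OF x0K] vx0 eta01[of xs] d0 a0 by (intro add_mono mult_left_mono) auto
        finally show ?thesis by simp
      qed
      have xsB: "xs \<in> ball 0 r" using xsK assms(6) by simp
      define f where "f = stable_integrand mu s w xs"
      have fi: "integrable lborel f" and af: "a \<le> integral\<^sup>L lborel f"
        using Lw[OF xsB wxs] unfolding f_def stable_op_defined_def stable_op_def by auto
      define c where "c = 2 * \<delta> * a * M * Lam"
      have fle: "f y \<le> c * G y" for y
      proof (cases "y = 0")
        case True then show ?thesis unfolding f_def G_def stable_integrand_def by simp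
      next
        case False
        define D where "D = 2 * \<delta> * a * M * min 1 (norm y)"
        have D0: "D \<ge> 0" unfolding D_def using d0 a0 M1 by simp
        have dle: "w xs - w (xs + y) \<le> D"
        proof -
          have "w xs - w (xs + y) \<le> 2 * \<delta> * a * (\<eta> xs - \<eta> (xs + y))"
            using vmin[of "xs + y"] unfolding v_def by (simp add: algebra_simps)
          also have "\<dots> \<le> 2 * \<delta> * a * (M * min 1 (norm y))"
            using etalip d0 a0 by (intro mult_left_mono) auto
          finally show ?thesis unfolding D_def by (simp add: mult.assoc)
        qed
        have sph: "y /\<^sub>R norm y \<in> sphere 0 1" using False by simp
        have mu1: "lam \<le> mu (y /\<^sub>R norm y)" and mu2: "mu (y /\<^sub>R norm y) \<le> Lam" using mub[OF sph] by auto
        have mu0: "mu (y /\<^sub>R norm y) > 0" using mu1 assms(4) by linarith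
        have np: "norm y powr p > 0" using False by simp
        have "(w xs - w (xs + y)) * mu (y /\<^sub>R norm y) \<le> D * mu (y /\<^sub>R norm y)"
          using dle mu0 by (intro mult_right_mono) auto
        also have "\<dots> \<le> D * Lam" using mu2 D0 by (intro mult_left_mono) auto
        finally have "(w xs - w (xs + y)) * mu (y /\<^sub>R norm y) / norm y powr p \<le> D * Lam / norm y powr p"
          using np by (intro divide_right_mono) auto
        also have "D * Lam / norm y powr p = c * G y" unfolding D_def c_def G_def by simp
        finally show ?thesis unfolding f_def stable_integrand_def p_def .
      qed
      have "integral\<^sup>L lborel f \<le> integral\<^sup>L lborel (\<lambda>y. c * G y)"
        using fi Gi fle by (intro integral_mono) auto
      also have "\<dots> = c * C" unfolding C_def by simp
      finally have "a \<le> c * C" using af by linarith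
      moreover have "c * C = a * (2 * \<delta> * M * Lam * C)" unfolding c_def by (simp add: algebra_simps)
      moreover have "a * (2 * \<delta> * M * Lam * C) < a * (1 / 2)" using dsmall a0 by (intro mult_strict_left_mono) auto
      ultimately show False using a0 by linarith
    qed
  qed
qed

end
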